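(* Assume $\theta_i<1$ for all $i$ and $\theta_j>0$ for some $j$. Suppose $\mathcal G(C)$ is a star topology with center node $l$ and $0<\theta_l<1$. Let $x^*$ be any equilibrium social power of systems (A) and (B). Then: (i) for any $i,j\in\mathcal V_f$, if $C_{li}>C_{lj}$ then $x^*_i>x^*_j$; (ii) for any $i\in\mathcal V_f$ and $j\in\mathcal V_p\setminus\{l\}$, if $C_{li}=C_{lj}$ then $x^*_i>x^*_j$; (iii) for any $i,j\in\mathcal V_p\setminus\{l\}$ with $C_{li}=C_{lj}$, $x^*_i>x^*_j$ if and only if $\theta_i<\theta_j$; (iv) for any $i,j\in\mathcal V_p\setminus\{l\}$ with $\theta_i=\theta_j$, $x^*_i>x^*_j$ if and only if $C_{li}>C_{lj}$.
   Context: Let $n\ge 2$, $\mathbf 1_n$ the all-ones vector, $I_n$ the identity matrix, $\Delta_n=\{x\in\mathbb R^n: x\ge 0,\ \mathbf 1_n^Tx=1\}$. Let $C\in\mathbb R^{n\times n}$ be a nonnegative row-stochastic matrix with zero diagonal, and $\mathcal G(C)$ the digraph on $\{1,\dots,n\}$ with an edge $(i,j)$ iff $C_{ij}>0$. $\mathcal G(C)$ is a star topology with center node $l$ if every edge of $\mathcal G(C)$ is either from $l$ or to $l$ (i.e. $C_{ij}>0$ implies $i=l$ or $j=l$). Let $\theta=(\theta_1,\dots,\theta_n)\in[0,1]^n$, $\Theta=\mathrm{diag}(\theta)$, $W(x)=\mathrm{diag}(x)+(I_n-\mathrm{diag}(x))C$. Let $\mathcal V_f=\{i:\theta_i=0\}$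 and $\mathcal V_p=\{i:\theta_i>0\}$. System (A): $x(s+1)=F(x(s))$, $x(0)\in\Delta_n$, where $F(x)=(I_n-\Theta)(I_n-W(x)^T\Theta)^{-1}\mathbf 1_n/n$; an equilibrium is $x^*\in\Delta_n$ with $F(x^* )=x^*$. System (B): $V(k+1)=\Theta W(x(k))V(k)+I_n-\Theta$, $x(k+1)=V(k+1)^T\mathbf 1_n/n$, with $V(0)=I_n$, $x(0)\in\Delta_n$; an equilibrium is a pair $(V^*,x^* )$ with $V^*$ row-stochastic, $x^*\in\Delta_n$, $V^*=\Theta W(x^* )V^*+I_n-\Theta$, $x^*=(V^* )^T\mathbf 1_n/n$. The equilibrium social powers of (A) and (B) coincide (the fixed points of $F$). *)

theory Defs
  imports "HOL-Analysis.Analysis"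
begin

definition diag_mat :: "real^'n \<Rightarrow> real^'n^'n" where
  "diag_mat x = (\<chi> i j. if i = j then x $ i else 0)"

definition ones_vec :: "real^'n" where
  "ones_vec = (\<chi> i. 1)"

definition prob_simplex :: "(real^'n) set" where
  "prob_simplex = {x. (\<forall>i. 0 \<le> x $ i) \<and> (\<Sum>i\<in>UNIV. x $ i) = 1}"

definition row_stochastic :: "real^'n^'n \<Rightarrow> bool" where
  "row_stochastic C \<longleftrightarrow> (\<forall>i j. 0 \<le> C $ i $ j) \<and> (\<forall>i. (\<Sum>j\<in>UNIV. C $ i $ j) = 1)"

definition zero_diag :: "real^'n^'n \<Rightarrow> bool" where
  "zero_diag C \<longleftrightarrow> (\<forall>i. C $ i $ i = 0)"

definition star_topology :: "real^'n^'n \<Rightarrow> 'n \<Rightarrow> bool" where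
  "star_topology C l \<longleftrightarrow> (\<forall>i j. C $ i $ j > 0 \<longrightarrow> i = l \<or> j = l)"

definition Wmat :: "real^'n^'n \<Rightarrow> real^'n \<Rightarrow> real^'n^'n" where
  "Wmat C x = diag_mat x + (mat 1 - diag_mat x) ** C"

definition Fmap :: "real^'n^'n \<Rightarrow> real^'n \<Rightarrow> real^'n \<Rightarrow> real^'n" where
  "Fmap C \<theta> x = (mat 1 - diag_mat \<theta>) *v
     (matrix_inv (mat 1 - transpose (Wmat C x) ** diag_mat \<theta>) *v
        ((1 / real CARD('n)) *\<^sub>R ones_vec))"

text \<open>Equilibrium social power of system (A) (equivalently of (B)).\<close>
definition equilibrium :: "real^'n^'n \<Rightarrow> real^'n \<Rightarrow> real^'n \<Rightarrow> bool" where
  "equilibrium C \<theta> x \<longleftrightarrow> x \<in> prob_simplex \<and> Fmap C \<theta> x = x"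

end

theory Submission imports Defs begin

lemma arith_lt:
  fixes a t S :: real
  assumes "0<a" "a<1" "0<t" "t<1" "a = (1-t)*S + t*a^2" shows "a < S"
proof -
  have "a^2 < a" using assms(1,2) by (simp add: power2_eq_square)
  then have "t*a^2 < t*a" using assms(3) by simp
  then have "a < (1-t)*S + t*a" using assms(5) by linarith
  then have "(1-t)*a < (1-t)*S" by (simp add: algebra_simps)
  then show ?thesis using assms(4) by simp
qed

lemma arith_iii:
  fixes a b S ti tj :: real
  assumes "0<a" "0<b" "a+b \<le> 1" "0<S" "a^2 < S" "b^2 < S"
    "a = (1-ti)*S + ti*a^2" "b = (1-tj)*S + tj*b^2"
  shows "b < a \<longleftrightarrow> ti < tj"
proof -
  have ha: "S - a = ti*(S-a^2)" using assms(7) by (simp add: algebra_simps)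
  have hb: "S - b = tj*(S-b^2)" using assms(8) by (simp add: algebra_simps)
  have "(ti-tj)*((S-a^2)*(S-b^2)) = (S-a)*(S-b^2) - (S-b)*(S-a^2)"
    by (simp add: ha hb algebra_simps)
  also have "\<dots> = (b-a)*(S*(1-a-b)+a*b)"
    by (simp add: algebra_simps power2_eq_square)
  finally have eq: "(ti-tj)*((S-a^2)*(S-b^2)) = (b-a)*(S*(1-a-b)+a*b)" .
  have P: "(S-a^2)*(S-b^2) > 0" using assms(5,6) by simp
  have Q: "S*(1-a-b)+a*b > 0" using assms(1-4)
    by (simp add: add_nonneg_pos)
  have "b < a \<longleftrightarrow> (b-a)*(S*(1-a-b)+a*b) < 0" using Q by (simp add: mult_less_0_iff)
  also have "\<dots> \<longleftrightarrow> (ti-tj)*((S-a^2)*(S-b^2)) < 0" using eq by simp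
  also have "\<dots> \<longleftrightarrow> ti < tj" using assms(5,6) by (auto simp add: mult_less_0_iff)
  finally show ?thesis .
qed

lemma arith_iv:
  fixes a b Si Sj t :: real
  assumes "0<a" "0<b" "a+b \<le> 1" "0\<le>t" "t<1"
    "a = (1-t)*Si + t*a^2" "b = (1-t)*Sj + t*b^2"
  shows "b < a \<longleftrightarrow> Sj < Si"
proof -
  have eq: "(a-b)*(1 - t*(a+b)) = (1-t)*(Si-Sj)"
    using assms(6,7) by (simp add: algebra_simps power2_eq_square)
  have "t*(a+b) \<le> t" using assms(3,4) mult_left_le by blast
  then have P: "1 - t*(a+b) > 0" using assms(5) by simp
  have "b < a \<longleftrightarrow> (a-b)*(1 - t*(a+b)) > 0" using P by (simp add: zero_less_mult_iff)
  also have "\<dots> \<longleftrightarrow> (1-t)*(Si-Sj) > 0" using eq by simp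
  also have "\<dots> \<longleftrightarrow> Sj < Si" using assms(5) by (simp add: zero_less_mult_iff)
  finally show ?thesis .
qed

lemma kernel_lemma:
  fixes w :: "'n::finite \<Rightarrow> 'n \<Rightarrow> real" and t u :: "'n \<Rightarrow> real"
  assumes w0: "\<forall>j i. 0 \<le> w j i" and w1: "\<forall>j. (\<Sum>i\<in>UNIV. w j i) = 1"
    and t: "\<forall>j. 0 \<le> t j \<and> t j < 1" and u0: "\<forall>i. 0 \<le> u i"
    and ub: "\<forall>i. u i \<le> (\<Sum>j\<in>UNIV. w j i * t j * u j)"
  shows "u i = 0"
proof -
  have "(\<Sum>i\<in>UNIV. u i) \<le> (\<Sum>i\<in>UNIV. \<Sum>j\<in>UNIV. w j i * t j * u j)"
    by (rule sum_mono) (use ub in auto)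
  also have "\<dots> = (\<Sum>j\<in>UNIV. \<Sum>i\<in>UNIV. w j i * t j * u j)" by (rule sum.swap)
  also have "\<dots> = (\<Sum>j\<in>UNIV. t j * u j * (\<Sum>i\<in>UNIV. w j i))"
    by (simp add: sum_distrib_left mult_ac)
  also have "\<dots> = (\<Sum>j\<in>UNIV. t j * u j)" using w1 by simp
  finally have "(\<Sum>j\<in>UNIV. u j - t j * u j) \<le> 0" by (simp add: sum_subtractf)
  then have le: "(\<Sum>j\<in>UNIV. (1 - t j) * u j) \<le> 0" by (simp add: algebra_simps)
  have nn: "\<forall>j\<in>UNIV. 0 \<le> (1 - t j) * u j" using t u0 by (simp add: less_imp_le)
  then have "(\<Sum>j\<in>UNIV. (1 - t j) * u j) = 0" using le by (meson antisym sum_nonneg)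
  then have "\<forall>j\<in>UNIV. (1 - t j) * u j = 0" using nn by (simp add: sum_nonneg_eq_0_iff)
  then have "(1 - t i) * u i = 0" by simp
  moreover have "1 - t i \<noteq> 0" using t by (simp add: less_imp_neq)
  ultimately show ?thesis by simp
qed

lemma main_facts:
  fixes C :: "real^'n^'n" and \<theta> :: "real^'n" and x :: "real^'n" and l :: 'n
  assumes n2: "CARD('n) \<ge> 2"
    and C_rs: "row_stochastic C"
    and theta_range: "\<forall>i. 0 \<le> \<theta> $ i \<and> \<theta> $ i < 1"
    and star: "star_topology C l"
    and theta_l: "0 < \<theta> $ l"
    and eq: "equilibrium C \<theta> x"
  shows "\<exists>K>0. (\<forall>i. 0 < x$i) \<and> (\<forall>i j. i \<noteq> j \<longrightarrow> x$i + x$j \<le> 1) \<and>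
     (\<forall>i. i \<noteq> l \<longrightarrow> x$i = (1 - \<theta>$i) * (1/real CARD('n) + C$l$i * K) + \<theta>$i * (x$i)^2)"
proof -
  define W where "W = Wmat C x"
  define M where "M = mat 1 - transpose W ** diag_mat \<theta>"
  define b :: "real^'n" where "b = (1 / real CARD('n)) *\<^sub>R ones_vec"
  have xs: "\<forall>i. 0 \<le> x$i" "(\<Sum>i\<in>UNIV. x$i) = 1" using eq by (auto simp: equilibrium_def prob_simplex_def)
  have x1: "x$i \<le> 1" for i
    using member_le_sum[of i UNIV "\<lambda>i. x$i"] xs by auto
  have C0: "0 \<le> C$i$j" and C1: "(\<Sum>j\<in>UNIV. C$i$j) = 1" for i j
    using C_rs by (auto simp: row_stochastic_def)
  have Wij: "W$j$i = (if j = i then x$j else 0) + (1 - x$j) * C$j$i" for j i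
  proof -
    have "((mat 1 - diag_mat x) ** C)$j$i = (\<Sum>k\<in>UNIV. (if j = k then 1 - x$j else 0) * C$k$i)"
      by (simp add: matrix_matrix_mult_def mat_def diag_mat_def, intro sum.cong, auto)
    also have "\<dots> = (1 - x$j) * C$j$i"
      by (subst sum.cong[OF refl, where h="\<lambda>k. if j = k then (1 - x$j) * C$k$i else 0"]) auto
    finally show ?thesis by (simp add: W_def Wmat_def diag_mat_def)
  qed
  have W0: "0 \<le> W$j$i" for j i using Wij[of j i] xs(1) x1[of j] C0[of j i] by auto
  have W1: "(\<Sum>i\<in>UNIV. W$j$i) = 1" for j
  proof -
    have "(\<Sum>i\<in>UNIV. W$j$i) = (\<Sum>i\<in>UNIV. (if j = i then x$j else 0)) + (\<Sum>i\<in>UNIV. (1 - x$j) * C$j$i)"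
      by (simp add: Wij sum.distrib)
    also have "\<dots> = x$j + (1 - x$j)" by (simp add: sum_distrib_left[symmetric] C1)
    finally show ?thesis by simp
  qed
  have Mv: "(M *v v)$i = v$i - (\<Sum>j\<in>UNIV. W$j$i * \<theta>$j * v$j)" for v i
  proof -
    have "(transpose W ** diag_mat \<theta>)$i$k = W$k$i * \<theta>$k" for k
      by (simp add: matrix_matrix_mult_def transpose_def diag_mat_def if_distrib cong: if_cong)
    then have "(M *v v)$i = (\<Sum>j\<in>UNIV. (if i = j then v$j else 0) - W$j$i * \<theta>$j * v$j)"
      unfolding M_def matrix_vector_mult_def by (simp add: mat_def, intro sum.cong) (auto simp: algebra_simps)
    then show ?thesis by (simp add: sum_subtractf)
  qed
  have ker: "v = 0" if "M *v v = 0" for v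
  proof -
    have "\<bar>v$i\<bar> = 0" for i
    proof (rule kernel_lemma[where w="\<lambda>j i. W$j$i" and t="\<lambda>j. \<theta>$j" and u="\<lambda>i. \<bar>v$i\<bar>"])
      show "\<forall>i. \<bar>v$i\<bar> \<le> (\<Sum>j\<in>UNIV. W$j$i * \<theta>$j * \<bar>v$j\<bar>)"
      proof
        fix i
        have "v$i = (\<Sum>j\<in>UNIV. W$j$i * \<theta>$j * v$j)" using Mv[of v i] that by simp
        then have "\<bar>v$i\<bar> \<le> (\<Sum>j\<in>UNIV. \<bar>W$j$i * \<theta>$j * v$j\<bar>)" using sum_abs[of "\<lambda>j. W$j$i * \<theta>$j * v$j" UNIV] by simp
        also have "\<dots> = (\<Sum>j\<in>UNIV. W$j$i * \<theta>$j * \<bar>v$j\<bar>)"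
          using W0 theta_range by (simp add: abs_mult)
        finally show "\<bar>v$i\<bar> \<le> (\<Sum>j\<in>UNIV. W$j$i * \<theta>$j * \<bar>v$j\<bar>)" .
      qed
    qed (use W0 W1 theta_range in auto)
    then show ?thesis by (simp add: vec_eq_iff)
  qed
  have "invertible M"
    unfolding invertible_left_inverse using matrix_left_invertible_ker ker by blast
  then have "M ** matrix_inv M = mat 1"
    unfolding matrix_inv_def invertible_def by (rule someI_ex[where P="\<lambda>A'. M ** A' = mat 1 \<and> A' ** M = mat 1", THEN conjunct1])
  define y where "y = matrix_inv M *v b"
  have My: "M *v y = b" unfolding y_def
    by (simp add: matrix_vector_mul_assoc \<open>M ** matrix_inv M = mat 1\<close>)
  have yeq: "y$i = 1 / real CARD('n) + (\<Sum>j\<in>UNIV. W$j$i * \<theta>$j * y$j)" for i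
    using Mv[of y i] My by (simp add: b_def ones_vec_def)
  have xy: "x$i = (1 - \<theta>$i) * y$i" for i
  proof -
    have "x = Fmap C \<theta> x" using eq by (simp add: equilibrium_def)
    also have "\<dots> = (mat 1 - diag_mat \<theta>) *v y"
      by (simp add: Fmap_def y_def M_def W_def b_def)
    finally have "x$i = ((mat 1 - diag_mat \<theta>) *v y)$i" by simp
    also have "\<dots> = (\<Sum>j\<in>UNIV. ((if i = j then 1 else 0) - (if i = j then \<theta>$i else 0)) * y$j)"
      by (simp add: matrix_vector_mult_def mat_def diag_mat_def)
    also have "\<dots> = (\<Sum>j\<in>UNIV. if i = j then (1 - \<theta>$i) * y$j else 0)"
      by (rule sum.cong) auto
    finally show ?thesis by simp
  qed
  have yneg: "max 0 (- y$i) = 0" for i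
  proof (rule kernel_lemma[where w="\<lambda>j i. W$j$i" and t="\<lambda>j. \<theta>$j" and u="\<lambda>i. max 0 (- y$i)"])
    show "\<forall>i. max 0 (- y$i) \<le> (\<Sum>j\<in>UNIV. W$j$i * \<theta>$j * max 0 (- y$j))"
    proof
      fix i
      have t0: "0 \<le> W$j$i * \<theta>$j" for j using W0 theta_range by simp
      have s0: "0 \<le> (\<Sum>j\<in>UNIV. W$j$i * \<theta>$j * max 0 (- y$j))"
        by (rule sum_nonneg) (simp add: t0)
      have "- (\<Sum>j\<in>UNIV. W$j$i * \<theta>$j * y$j) \<le> (\<Sum>j\<in>UNIV. W$j$i * \<theta>$j * max 0 (- y$j))"
        unfolding sum_negf[symmetric]
      proof (rule sum_mono)
        fix j
        have "- y$j \<le> max 0 (- y$j)" by simp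
        then have "W$j$i * \<theta>$j * (- y$j) \<le> W$j$i * \<theta>$j * max 0 (- y$j)"
          by (rule mult_left_mono) (simp add: t0)
        then show "- (W$j$i * \<theta>$j * y$j) \<le> W$j$i * \<theta>$j * max 0 (- y$j)" by simp
      qed
      moreover have "0 < 1 / real CARD('n)" by simp
      ultimately show "max 0 (- y$i) \<le> (\<Sum>j\<in>UNIV. W$j$i * \<theta>$j * max 0 (- y$j))"
        using yeq[of i] s0 by linarith
    qed
  qed (use W0 W1 theta_range in auto)
  have ypos: "0 < y$i" for i
  proof -
    have "0 \<le> y$j" for j using yneg[of j] by linarith
    then have "0 \<le> (\<Sum>j\<in>UNIV. W$j$i * \<theta>$j * y$j)"
      using W0 theta_range by (intro sum_nonneg) simp
    then show ?thesis using yeq[of i] by (simp add: add_pos_nonneg)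
  qed
  have xpos: "\<forall>i. 0 < x$i" using xy ypos theta_range by simp
  have pair: "\<forall>i j. i \<noteq> j \<longrightarrow> x$i + x$j \<le> 1"
  proof (intro allI impI)
    fix i j :: 'n assume "i \<noteq> j"
    have "(\<Sum>k\<in>{i,j}. x$k) \<le> (\<Sum>k\<in>UNIV. x$k)" by (rule sum_mono2) (use xs in auto)
    then show "x$i + x$j \<le> 1" using \<open>i \<noteq> j\<close> xs by simp
  qed
  obtain i0 where "i0 \<noteq> l"
  proof -
    have "UNIV \<noteq> {l}"
    proof
      assume "UNIV = {l}"
      then have "card (UNIV::'n set) = card {l}" by (rule arg_cong)
      then have "CARD('n) = 1" by simp
      with n2 show False by simp
    qed
    then obtain i0 where "i0 \<noteq> l" by auto
    with that show ?thesis .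
  qed
  then have "x$i0 + x$l \<le> 1" using pair by simp
  then have xl: "x$l < 1" using xpos[rule_format, of i0] by linarith
  define K where "K = (1 - x$l) * \<theta>$l * y$l"
  have Kpos: "K > 0" using xl theta_l ypos[of l] by (simp add: K_def)
  have key: "x$i = (1 - \<theta>$i) * (1/real CARD('n) + C$l$i * K) + \<theta>$i * (x$i)^2" if "i \<noteq> l" for i
  proof -
    have Cz: "C$j$i = 0" if "j \<noteq> l" for j
      using star C0[of j i] \<open>i \<noteq> l\<close> that unfolding star_topology_def by force
    have "(\<Sum>j\<in>UNIV. W$j$i * \<theta>$j * y$j)
        = (\<Sum>j\<in>UNIV. (if j = i then x$j * \<theta>$j * y$j else 0)) + (\<Sum>j\<in>UNIV. (1 - x$j) * C$j$i * \<theta>$j * y$j)"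
      unfolding sum.distrib[symmetric] by (rule sum.cong) (auto simp: Wij algebra_simps)
    also have "(\<Sum>j\<in>UNIV. (1 - x$j) * C$j$i * \<theta>$j * y$j) = (\<Sum>j\<in>UNIV. (if j = l then (1 - x$j) * C$j$i * \<theta>$j * y$j else 0))"
      by (rule sum.cong) (auto simp: Cz)
    finally have "(\<Sum>j\<in>UNIV. W$j$i * \<theta>$j * y$j) = x$i * \<theta>$i * y$i + C$l$i * K"
      by (simp add: K_def)
    then have yi: "y$i = 1/real CARD('n) + x$i * \<theta>$i * y$i + C$l$i * K" using yeq[of i] by simp
    have "x$i = (1 - \<theta>$i) * y$i" by (rule xy)
    also have "\<dots> = (1 - \<theta>$i) * (1/real CARD('n) + C$l$i * K) + \<theta>$i * x$i * ((1 - \<theta>$i) * y$i)"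
      by (subst yi) (simp add: algebra_simps)
    finally have h: "x$i = (1 - \<theta>$i) * (1/real CARD('n) + C$l$i * K) + \<theta>$i * x$i * ((1 - \<theta>$i) * y$i)" .
    have "(1 - \<theta>$i) * y$i = x$i" using xy[of i] by simp
    with h show ?thesis by (simp add: power2_eq_square mult_ac)
  qed
  show ?thesis using Kpos xpos pair key by blast
qed

lemma part_pre:
  fixes C :: "real^'n^'n" and \<theta> :: "real^'n" and x :: "real^'n" and l :: 'n
    and S :: "'n \<Rightarrow> real" and K c :: real
  assumes Kpos: "K > 0" and cpos: "c > 0" and xpos: "\<forall>i. 0 < x$i"
    and pair: "\<forall>i j. i \<noteq> j \<longrightarrow> x$i + x$j \<le> 1"
    and C0: "\<forall>i j. 0 \<le> C$i$j"
    and theta_range: "\<forall>i. 0 \<le> \<theta> $ i \<and> \<theta> $ i < 1"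
    and theta_l: "0 < \<theta> $ l"
    and Sdef: "\<forall>i. S i = c + C$l$i * K"
    and keyS: "\<forall>i. i \<noteq> l \<longrightarrow> x$i = (1 - \<theta>$i) * S i + \<theta>$i * (x$i)^2"
  shows "\<forall>i. i \<noteq> l \<and> 0 < \<theta>$i \<longrightarrow> x$i < S i \<and> (x$i)^2 < S i"
proof (intro allI impI)
  fix i assume h: "i \<noteq> l \<and> 0 < \<theta>$i"
  have "x$i + x$l \<le> 1" using pair h by blast
  then have lt: "x$i < 1" using xpos[rule_format, of l] by linarith
  have ltS: "x$i < S i"
    using arith_lt[of "x$i" "\<theta>$i" "S i"] lt xpos theta_range keyS h by auto
  have "(x$i)^2 < x$i" using lt xpos by (simp add: power2_eq_square)
  then show "x$i < S i \<and> (x$i)^2 < S i" using ltS by linarith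
qed

lemma part1:
  fixes C :: "real^'n^'n" and \<theta> :: "real^'n" and x :: "real^'n" and l :: 'n
    and S :: "'n \<Rightarrow> real" and K c :: real
  assumes Kpos: "K > 0" and cpos: "c > 0" and xpos: "\<forall>i. 0 < x$i"
    and pair: "\<forall>i j. i \<noteq> j \<longrightarrow> x$i + x$j \<le> 1"
    and C0: "\<forall>i j. 0 \<le> C$i$j"
    and theta_range: "\<forall>i. 0 \<le> \<theta> $ i \<and> \<theta> $ i < 1"
    and theta_l: "0 < \<theta> $ l"
    and Sdef: "\<forall>i. S i = c + C$l$i * K"
    and keyS: "\<forall>i. i \<noteq> l \<longrightarrow> x$i = (1 - \<theta>$i) * S i + \<theta>$i * (x$i)^2"
  shows "\<forall>i j. \<theta> $ i = 0 \<and> \<theta> $ j = 0 \<and> C $ l $ i > C $ l $ j \<longrightarrow> x $ i > x $ j"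
proof (intro allI impI)
  fix i j assume h: "\<theta> $ i = 0 \<and> \<theta> $ j = 0 \<and> C $ l $ i > C $ l $ j"
  then have "i \<noteq> l" "j \<noteq> l" using theta_l by auto
  then have "x$i = S i" "x$j = S j" using keyS h by auto
  moreover have "C$l$j * K < C$l$i * K" using h Kpos by simp
  ultimately show "x $ i > x $ j" using Sdef by simp
qed

lemma part2:
  fixes C :: "real^'n^'n" and \<theta> :: "real^'n" and x :: "real^'n" and l :: 'n
    and S :: "'n \<Rightarrow> real" and K c :: real
  assumes Kpos: "K > 0" and cpos: "c > 0" and xpos: "\<forall>i. 0 < x$i"
    and pair: "\<forall>i j. i \<noteq> j \<longrightarrow> x$i + x$j \<le> 1"
    and C0: "\<forall>i j. 0 \<le> C$i$j"
    and theta_range: "\<forall>i. 0 \<le> \<theta> $ i \<and> \<theta> $ i < 1"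
    and theta_l: "0 < \<theta> $ l"
    and Sdef: "\<forall>i. S i = c + C$l$i * K"
    and keyS: "\<forall>i. i \<noteq> l \<longrightarrow> x$i = (1 - \<theta>$i) * S i + \<theta>$i * (x$i)^2"
  shows "\<forall>i j. \<theta> $ i = 0 \<and> \<theta> $ j > 0 \<and> j \<noteq> l \<and> C $ l $ i = C $ l $ j \<longrightarrow> x $ i > x $ j"
proof (intro allI impI)
  fix i j assume h: "\<theta> $ i = 0 \<and> \<theta> $ j > 0 \<and> j \<noteq> l \<and> C $ l $ i = C $ l $ j"
  have pre: "\<forall>i. i \<noteq> l \<and> 0 < \<theta>$i \<longrightarrow> x$i < S i \<and> (x$i)^2 < S i"
    by (rule part_pre[OF Kpos cpos xpos pair C0 theta_range theta_l Sdef keyS])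
  have "i \<noteq> l" using h theta_l by auto
  then have "x$i = S i" using keyS h by auto
  moreover have "S i = S j" using h Sdef by simp
  moreover have "x$j < S j" using pre h by blast
  ultimately show "x $ i > x $ j" by simp
qed

lemma part3:
  fixes C :: "real^'n^'n" and \<theta> :: "real^'n" and x :: "real^'n" and l :: 'n
    and S :: "'n \<Rightarrow> real" and K c :: real
  assumes Kpos: "K > 0" and cpos: "c > 0" and xpos: "\<forall>i. 0 < x$i"
    and pair: "\<forall>i j. i \<noteq> j \<longrightarrow> x$i + x$j \<le> 1"
    and C0: "\<forall>i j. 0 \<le> C$i$j"
    and theta_range: "\<forall>i. 0 \<le> \<theta> $ i \<and> \<theta> $ i < 1"
    and theta_l: "0 < \<theta> $ l"
    and Sdef: "\<forall>i. S i = c + C$l$i * K"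
    and keyS: "\<forall>i. i \<noteq> l \<longrightarrow> x$i = (1 - \<theta>$i) * S i + \<theta>$i * (x$i)^2"
  shows "\<forall>i j. \<theta> $ i > 0 \<and> i \<noteq> l \<and> \<theta> $ j > 0 \<and> j \<noteq> l \<and> C $ l $ i = C $ l $ j \<longrightarrow>
              (x $ i > x $ j \<longleftrightarrow> \<theta> $ i < \<theta> $ j)"
proof (intro allI impI)
  fix i j assume h: "\<theta> $ i > 0 \<and> i \<noteq> l \<and> \<theta> $ j > 0 \<and> j \<noteq> l \<and> C $ l $ i = C $ l $ j"
  have pre: "\<forall>i. i \<noteq> l \<and> 0 < \<theta>$i \<longrightarrow> x$i < S i \<and> (x$i)^2 < S i"
    by (rule part_pre[OF Kpos cpos xpos pair C0 theta_range theta_l Sdef keyS])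
  show "x $ i > x $ j \<longleftrightarrow> \<theta> $ i < \<theta> $ j"
  proof (cases "i = j")
    case False
    have SS: "S j = S i" using h Sdef by simp
    have Sp: "0 < S i" using Sdef cpos C0 Kpos by (simp add: add_pos_nonneg)
    have a: "x$i = (1 - \<theta>$i) * S i + \<theta>$i * (x$i)^2" using keyS h by blast
    have b: "x$j = (1 - \<theta>$j) * S i + \<theta>$j * (x$j)^2" using keyS h SS by auto
    have "x$i + x$j \<le> 1" using pair False by blast
    moreover have "(x$i)^2 < S i" using pre h by blast
    moreover have "(x$j)^2 < S i" using pre h SS by auto
    ultimately show ?thesis
      using arith_iii[of "x$i" "x$j" "S i" "\<theta>$i" "\<theta>$j"] xpos Sp a b by blast
  qed simp
qed

lemma part4:
  fixes C :: "real^'n^'n" and \<theta> :: "real^'n" and x :: "real^'n" and l :: 'n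
    and S :: "'n \<Rightarrow> real" and K c :: real
  assumes Kpos: "K > 0" and cpos: "c > 0" and xpos: "\<forall>i. 0 < x$i"
    and pair: "\<forall>i j. i \<noteq> j \<longrightarrow> x$i + x$j \<le> 1"
    and C0: "\<forall>i j. 0 \<le> C$i$j"
    and theta_range: "\<forall>i. 0 \<le> \<theta> $ i \<and> \<theta> $ i < 1"
    and theta_l: "0 < \<theta> $ l"
    and Sdef: "\<forall>i. S i = c + C$l$i * K"
    and keyS: "\<forall>i. i \<noteq> l \<longrightarrow> x$i = (1 - \<theta>$i) * S i + \<theta>$i * (x$i)^2"
  shows "\<forall>i j. \<theta> $ i > 0 \<and> i \<noteq> l \<and> \<theta> $ j > 0 \<and> j \<noteq> l \<and> \<theta> $ i = \<theta> $ j \<longrightarrow>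
              (x $ i > x $ j \<longleftrightarrow> C $ l $ i > C $ l $ j)"
proof (intro allI impI)
  fix i j assume h: "\<theta> $ i > 0 \<and> i \<noteq> l \<and> \<theta> $ j > 0 \<and> j \<noteq> l \<and> \<theta> $ i = \<theta> $ j"
  show "x $ i > x $ j \<longleftrightarrow> C $ l $ i > C $ l $ j"
  proof (cases "i = j")
    case False
    have a: "x$i = (1 - \<theta>$i) * S i + \<theta>$i * (x$i)^2" using keyS h by blast
    have b: "x$j = (1 - \<theta>$i) * S j + \<theta>$i * (x$j)^2" using keyS h by auto
    have "x$i + x$j \<le> 1" using pair False by blast
    then have "x $ i > x $ j \<longleftrightarrow> S j < S i"
      using arith_iv[of "x$i" "x$j" "\<theta>$i" "S i" "S j"] xpos theta_range a b by blast
    also have "\<dots> \<longleftrightarrow> C$l$j * K < C$l$i * K" using Sdef by simp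
    also have "\<dots> \<longleftrightarrow> C $ l $ i > C $ l $ j" using Kpos by simp
    finally show ?thesis .
  qed simp
qed

theorem corollary3:
  fixes C :: "real^'n^'n" and \<theta> :: "real^'n" and x :: "real^'n" and l :: 'n
  assumes n2: "CARD('n) \<ge> 2"
    and C_rs: "row_stochastic C" and C_zd: "zero_diag C"
    and theta_range: "\<forall>i. 0 \<le> \<theta> $ i \<and> \<theta> $ i < 1"
    and theta_pos: "\<exists>j. \<theta> $ j > 0"
    and star: "star_topology C l"
    and theta_l: "0 < \<theta> $ l" "\<theta> $ l < 1"
    and eq: "equilibrium C \<theta> x"
  shows "(\<forall>i j. \<theta> $ i = 0 \<and> \<theta> $ j = 0 \<and> C $ l $ i > C $ l $ j \<longrightarrow> x $ i > x $ j)
       \<and> (\<forall>i j. \<theta> $ i = 0 \<and> \<theta> $ j > 0 \<and> j \<noteq> l \<and> C $ l $ i = C $ l $ j \<longrightarrow> x $ i > x $ j)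
       \<and> (\<forall>i j. \<theta> $ i > 0 \<and> i \<noteq> l \<and> \<theta> $ j > 0 \<and> j \<noteq> l \<and> C $ l $ i = C $ l $ j \<longrightarrow>
              (x $ i > x $ j \<longleftrightarrow> \<theta> $ i < \<theta> $ j))
       \<and> (\<forall>i j. \<theta> $ i > 0 \<and> i \<noteq> l \<and> \<theta> $ j > 0 \<and> j \<noteq> l \<and> \<theta> $ i = \<theta> $ j \<longrightarrow>
              (x $ i > x $ j \<longleftrightarrow> C $ l $ i > C $ l $ j))"
proof -
  obtain K where Kpos: "K > 0" and xpos: "\<forall>i. 0 < x$i"
    and pair: "\<forall>i j. i \<noteq> j \<longrightarrow> x$i + x$j \<le> 1"
    and key: "\<forall>i. i \<noteq> l \<longrightarrow> x$i = (1 - \<theta>$i) * (1/real CARD('n) + C$l$i * K) + \<theta>$i * (x$i)^2"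
    using main_facts[OF n2 C_rs theta_range star theta_l(1) eq] by blast
  define S where "S = (\<lambda>i. 1/real CARD('n) + C$l$i * K)"
  have cpos: "0 < 1/real CARD('n)" by simp
  have C0: "\<forall>i j. 0 \<le> C$i$j" using C_rs by (auto simp: row_stochastic_def)
  have Sdef: "\<forall>i. S i = 1/real CARD('n) + C$l$i * K" by (simp add: S_def)
  have keyS: "\<forall>i. i \<noteq> l \<longrightarrow> x$i = (1 - \<theta>$i) * S i + \<theta>$i * (x$i)^2"
    using key by (simp add: S_def)
  note facts = Kpos cpos xpos pair C0 theta_range theta_l(1) Sdef keyS
  show ?thesis
    by (rule conjI[OF part1[OF facts] conjI[OF part2[OF facts] conjI[OF part3[OF facts] part4[OF facts]]]])
qed

end
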